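(* Let $\succ$ be an admissible ordering on ground literals, extended to ground clauses by its multiset extension. Let $C_i = A_i \lor D_i$ ($1\le i\le n$) be ground clauses such that the atom $A_i$ is strictly $\succ$-maximal in $C_i$, and let $C=\neg A_1\lor\dots\lor\neg A_n\lor D$ be a ground clause. Consider the inference (SRes) with side premises $C_1,\dots,C_n$, main premise $C$ and conclusion $D_1\lor\dots\lor D_n\lor D$. Let $I\subseteq\{1,\dots,n\}$ be nonempty and let $C_p=\bigvee_{i\in I}D_i\lor\bigvee_{j\notin I}\neg A_j\lor D$ (the conclusion of the corresponding partial inference resolving only the literals $\neg A_i$, $i\in I$). Then for every set $N$ of ground clauses, the SRes inference above is redundant with respect to $N\cup\{C_p\}$.
   Context: An ordering $\succ$ on literals is admissible if it is well-founded and total on ground literals and liftable, $\neg A\succ A$ for every ground atom $A$, and $B\succ A$ implies $B\succ\neg A$ for ground atoms $A,B$. A literal $L$ is strictly $\succ$-maximal in a ground clause $C$ if $L\succ L'$ for every other literal occurrence $L'$ in $C$. For a set $N$ of ground clauses, a ground inference with side premises $C_1,\dots,C_n$, main premise $C$ and conclusion $E$ is redundant with respect to $N$ if there are finitely many clauses in $N$, each strictly smaller than $C$ (in the multiset extension of $\succ$), which together with $C_1,\dots,C_n$ logically entail $E$. *)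

theory Defs
  imports "HOL-Library.Multiset"
begin

datatype 'a lit = Pos 'a | Neg 'a

type_synonym 'a clause = "'a lit multiset"

fun true_lit :: "'a set \<Rightarrow> 'a lit \<Rightarrow> bool" where
  "true_lit J (Pos A) = (A \<in> J)"
| "true_lit J (Neg A) = (A \<notin> J)"

definition true_cls :: "'a set \<Rightarrow> 'a clause \<Rightarrow> bool" where
  "true_cls J C \<longleftrightarrow> (\<exists>L \<in># C. true_lit J L)"

definition entails :: "'a clause set \<Rightarrow> 'a clause \<Rightarrow> bool" where
  "entails S E \<longleftrightarrow> (\<forall>J. (\<forall>C \<in> S. true_cls J C) \<longrightarrow> true_cls J E)"

text \<open>gt L L' means L \<succ> L'.\<close>

definition admissible :: "('a lit \<Rightarrow> 'a lit \<Rightarrow> bool) \<Rightarrow> bool" where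
  "admissible gt \<longleftrightarrow>
     (\<forall>L. \<not> gt L L) \<and>
     (\<forall>L1 L2 L3. gt L1 L2 \<longrightarrow> gt L2 L3 \<longrightarrow> gt L1 L3) \<and>
     wfP (\<lambda>L L'. gt L' L) \<and>
     (\<forall>L L'. L \<noteq> L' \<longrightarrow> gt L L' \<or> gt L' L) \<and>
     (\<forall>A. gt (Neg A) (Pos A)) \<and>
     (\<forall>A B. gt (Pos B) (Pos A) \<longrightarrow> gt (Pos B) (Neg A))"

definition cls_less :: "('a lit \<Rightarrow> 'a lit \<Rightarrow> bool) \<Rightarrow> 'a clause \<Rightarrow> 'a clause \<Rightarrow> bool" where
  "cls_less gt C C' \<longleftrightarrow> (C, C') \<in> mult {(L, L'). gt L' L}"

definition strictly_max_in :: "('a lit \<Rightarrow> 'a lit \<Rightarrow> bool) \<Rightarrow> 'a lit \<Rightarrow> 'a clause \<Rightarrow> bool" where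
  "strictly_max_in gt L C \<longleftrightarrow> L \<in># C \<and> (\<forall>L' \<in># C - {#L#}. gt L L')"

definition redundant_inf ::
  "('a lit \<Rightarrow> 'a lit \<Rightarrow> bool) \<Rightarrow> 'a clause set \<Rightarrow> 'a clause set \<Rightarrow> 'a clause \<Rightarrow> 'a clause \<Rightarrow> bool" where
  "redundant_inf gt N Sides C E \<longleftrightarrow>
     (\<exists>M. finite M \<and> M \<subseteq> N \<and> (\<forall>C' \<in> M. cls_less gt C' C) \<and> entails (M \<union> Sides) E)"

end

theory Submission
  imports Defs
begin

lemma in_sum_mset_iff:
  "finite A \<Longrightarrow> (x \<in># (\<Sum>i\<in>A. f i)) \<longleftrightarrow> (\<exists>i\<in>A. x \<in># f i)"
  by (induction A rule: finite_induct) auto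

theorem mainTheorem2:
  fixes gt :: "'a lit \<Rightarrow> 'a lit \<Rightarrow> bool"
    and n :: nat and A :: "nat \<Rightarrow> 'a" and Dc :: "nat \<Rightarrow> 'a clause"
    and D :: "'a clause" and I :: "nat set" and N :: "'a clause set"
  assumes adm: "admissible gt"
    and maxi: "\<forall>i \<in> {1..n}. strictly_max_in gt (Pos (A i)) (add_mset (Pos (A i)) (Dc i))"
    and I_sub: "I \<subseteq> {1..n}" and I_ne: "I \<noteq> {}"
  shows "redundant_inf gt
           (N \<union> {(\<Sum>i\<in>I. Dc i) + (\<Sum>j\<in>{1..n} - I. {#Neg (A j)#}) + D})
           ((\<lambda>i. add_mset (Pos (A i)) (Dc i)) ` {1..n})
           ((\<Sum>i\<in>{1..n}. {#Neg (A i)#}) + D)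
           ((\<Sum>i\<in>{1..n}. Dc i) + D)"
proof -
  define Cp where "Cp = (\<Sum>i\<in>I. Dc i) + (\<Sum>j\<in>{1..n} - I. {#Neg (A j)#}) + D"
  have finI: "finite I" using I_sub finite_subset by blast
  have trans: "\<And>a b c. gt a b \<Longrightarrow> gt b c \<Longrightarrow> gt a c" and negpos: "\<And>a. gt (Neg a) (Pos a)"
    using adm unfolding admissible_def by blast+
  have dc: "\<And>i L. i \<in> {1..n} \<Longrightarrow> L \<in># Dc i \<Longrightarrow> gt (Pos (A i)) L"
    using maxi unfolding strictly_max_in_def by auto
  have split: "(\<Sum>i\<in>{1..n}. {#Neg (A i)#}) = (\<Sum>i\<in>{1..n} - I. {#Neg (A i)#}) + (\<Sum>i\<in>I. {#Neg (A i)#})"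
    using sum.subset_diff[OF I_sub, of "\<lambda>i. {#Neg (A i)#}"] by simp
  have ne: "(\<Sum>i\<in>I. {#Neg (A i)#}) \<noteq> {#}"
  proof -
    obtain i where "i \<in> I" using I_ne by blast
    then show ?thesis using in_sum_mset_iff[OF finI, of "Neg (A i)" "\<lambda>i. {#Neg (A i)#}"] by auto
  qed
  have dom: "\<forall>k \<in> set_mset (\<Sum>i\<in>I. Dc i). \<exists>j \<in> set_mset (\<Sum>i\<in>I. {#Neg (A i)#}). (k, j) \<in> {(L, L'). gt L' L}"
  proof
    fix k assume "k \<in> set_mset (\<Sum>i\<in>I. Dc i)"
    then obtain i where i: "i \<in> I" "k \<in># Dc i" using in_sum_mset_iff[OF finI] by metis
    then have "gt (Neg (A i)) k" using dc I_sub trans negpos by blast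
    moreover have "Neg (A i) \<in># (\<Sum>i\<in>I. {#Neg (A i)#})"
      using in_sum_mset_iff[OF finI, of "Neg (A i)" "\<lambda>i. {#Neg (A i)#}"] i by auto
    ultimately show "\<exists>j \<in> set_mset (\<Sum>i\<in>I. {#Neg (A i)#}). (k, j) \<in> {(L, L'). gt L' L}" by auto
  qed
  have less: "cls_less gt Cp ((\<Sum>i\<in>{1..n}. {#Neg (A i)#}) + D)"
    unfolding cls_less_def Cp_def split
    using one_step_implies_mult[OF ne dom, of "(\<Sum>i\<in>{1..n} - I. {#Neg (A i)#}) + D"]
    by (simp add: ac_simps)
  have ent: "entails ({Cp} \<union> (\<lambda>i. add_mset (Pos (A i)) (Dc i)) ` {1..n}) ((\<Sum>i\<in>{1..n}. Dc i) + D)"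
    unfolding entails_def
  proof (intro allI impI)
    fix J assume H: "\<forall>C\<in>{Cp} \<union> (\<lambda>i. add_mset (Pos (A i)) (Dc i)) ` {1..n}. true_cls J C"
    have memc: "\<And>i L. i \<in> {1..n} \<Longrightarrow> L \<in># Dc i \<Longrightarrow> L \<in># (\<Sum>i\<in>{1..n}. Dc i) + D"
      using in_sum_mset_iff[of "{1..n}" _ Dc] by auto
    from H have "true_cls J Cp" by auto
    then obtain L where L: "L \<in># Cp" "true_lit J L" unfolding true_cls_def by blast
    show "true_cls J ((\<Sum>i\<in>{1..n}. Dc i) + D)"
    proof -
      consider (a) i where "i \<in> I" "L \<in># Dc i" | (b) j where "j \<in> {1..n} - I" "L = Neg (A j)" | (c) "L \<in># D"
        using L(1) unfolding Cp_def using in_sum_mset_iff[OF finI, of L Dc] in_sum_mset_iff[of "{1..n} - I" L "\<lambda>j. {#Neg (A j)#}"] by auto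
      then show ?thesis
      proof cases
        case a then show ?thesis using memc I_sub L(2) unfolding true_cls_def by blast
      next
        case b
        then have nA: "A j \<notin> J" using L(2) by simp
        have "true_cls J (add_mset (Pos (A j)) (Dc j))" using H b by auto
        then obtain L' where "L' \<in># Dc j" "true_lit J L'" using nA unfolding true_cls_def by auto
        then show ?thesis using memc b unfolding true_cls_def by blast
      next
        case c then show ?thesis using L(2) unfolding true_cls_def by auto
      qed
    qed
  qed
  show ?thesis unfolding redundant_inf_def
    by (rule exI[of _ "{Cp}"]) (use less ent in \<open>auto simp: Cp_def\<close>)
qed

end
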